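(* Let $G$, $H$, the supervisors with $\Sigma_{o,i},\Sigma_{c,i},N_{o,i}$, a controllable event $\sigma\in\Sigma_c$, $N=\max\{N_{o,i}:i\in I^c(\sigma)\}$, and the verifier $V^N_\sigma$ with reachable state set $X^N_\sigma$ be as in the context. Then the following are equivalent: (a) for every $s\in\mathcal{L}(H)$ with $|s|\ge N$, if $s\sigma\in\mathcal{L}(G)\setminus\mathcal{L}(H)$ then for every $(s_i)_{i\in I^c(\sigma)}\in\mathcal{T}^{\sigma}_{conf}(s)$ there exists $i\in I^c(\sigma)$ with $s_i\sigma\notin\mathcal{L}(H^{aug}_{N_{o,i}})$; (b) there is no state $(q,(q_i)_{i\in I^c(\sigma)},N)\in X^N_\sigma$ with $\sigma\in\Gamma(q)\setminus\Gamma_H(q)$ and $\sigma\in\Gamma^{aug}_{H,N_{o,i}}(q_i)$ for all $i\in I^c(\sigma)$.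
   Context: $G=(Q,\Sigma,\delta,\Gamma,q_0,Q_m)$ is a deterministic finite automaton (transition function extended to strings; $\Gamma(q)$ = set of events defined at $q$; $\mathcal{L}(G)$ its generated language). $H=(Q_H,\Sigma,\delta_H,\Gamma_H,q_0,Q_{m,H})$ is a sub-automaton of $G$. For a string $s$, $|s|$ is its length, $s_{-m}$ its prefix of length $\max\{0,|s|-m\}$, $\Sigma^{\le M}$ the strings of length at most $M$. Supervisors $I=\{1,\dots,n\}$: supervisor $i$ has observable events $\Sigma_{o,i}$, $\Sigma_{uo,i}=\Sigma\setminus\Sigma_{o,i}$, controllable events $\Sigma_{c,i}$, delay bound $N_{o,i}\in\mathbb{N}$; $\Sigma_c=\bigcup_i\Sigma_{c,i}$, $I^c(\sigma)=\{i:\sigma\in\Sigma_{c,i}\}$. $P_i$ is natural projection onto $\Sigma_{o,i}^*$; $\Theta_i^{N_{o,i}}(s)=\{P_i(s_{-m}):0\le m\le N_{o,i}\}$. For $s\in\mathcal{L}(H)$, $\mathcal{T}^\sigma_{conf}(s)$ is the set of tuples $(s_i)_{i\in I^c(\sigma)}$ with $P_i(s_i)\in\Theta_i^{N_{o,i}}(s)$ for all $i\in I^c(\sigma)$. Augmented automaton $H^{aug}_N$: states $Q_H\cup\{q_{dis}\}$, initial state $q_0$; for $q\in Q_H$, $e\in\Sigma$: $\delta^{aug}(q,e)=\delta_H(q,e)$ if $e\in\Gamma_H(q)$, $=q_{dis}$ if $e\notin\Gamma_H(q)$ and $e\in\Gamma_H(\delta_H(q,s'))$ for some $s'\in\Sigma^{\le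 N}$ with $\delta_H(q,s')$ defined, undefined otherwise; $q_{dis}$ has no outgoing transitions; $\Gamma^{aug}_{H,N}(q)$ is the set of events defined at $q$ in $H^{aug}_N$. Let $\Xi$ be the set of tuples $(q,(q_i)_{i\in I^c(\sigma)})$ such that there exist $t\in\mathcal{L}(H)$ with $q=\delta_H(q_0,t)$ and, for each $i\in I^c(\sigma)$, $s_i\in\mathcal{L}(H)$ with $q_i=\delta_H(q_0,s_i)$ and $P_i(s_i)=P_i(t)$. Verifier $V^N_\sigma$: states are tuples $(q,(q_i)_{i\in I^c(\sigma)},d)$ with $q,q_i\in Q_H$, $d\in[0,N]$; set of initial states $\{(q,(q_i)_i,0):(q,(q_i)_i)\in\Xi\}$. At a state $(q,(q_i)_i,d)$ and for $e\in\Sigma$, each $i\in I^c(\sigma)$ falls in one case: D1: $N-d>N_{o,i}$, $e\in\Sigma_{o,i}$; D2: $N-d>N_{o,i}$, $e\in\Sigma_{uo,i}$; D3: $N-d\le N_{o,i}$, $\sigma\notin\Gamma^{aug}_{H,N_{o,i}}(q_i)$, $e\in\Sigma_{o,i}$; D4: $N-d\le N_{o,i}$, $\sigma\notin\Gamma^{aug}_{H,N_{o,i}}(q_i)$, $e\in\Sigma_{uo,i}$; D5: $N-d\le N_{o,i}$, $\sigma\in\Gamma^{aug}_{H,N_{o,i}}(q_i)$. Type-1 transition: if $d+1\le N$, $\delta_H(q,e)$ is defined, and $\delta_H(q_i,e)$ is defined for every $i$ in case D1 or D3, there is a transition to $(\delta_H(q,e),(q_i')_i,d+1)$ with $q_i'=\delta_H(q_i,e)$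 for $i$ in D1 or D3 and $q_i'=q_i$ otherwise. Type-2 transition: for each $i$ in case D2 or D4 with $\delta_H(q_i,e)$ defined, there is a transition to the state obtained by replacing $q_i$ by $\delta_H(q_i,e)$, all other components unchanged. $X^N_\sigma$ is the set of states reachable from the initial states. *)

theory Defs
  imports Main
begin

text \<open>Marked states play no role in the statement and are omitted.\<close>

definition dfa :: "'q set \<Rightarrow> 'e set \<Rightarrow> ('q \<Rightarrow> 'e \<Rightarrow> 'q option) \<Rightarrow> 'q \<Rightarrow> bool" where
  "dfa Q Sig d q0 \<longleftrightarrow> finite Q \<and> finite Sig \<and> q0 \<in> Q \<and>
     (\<forall>q e q'. d q e = Some q' \<longrightarrow> q \<in> Q \<and> e \<in> Sig \<and> q' \<in> Q)"

definition sub_automaton ::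
  "'q set \<Rightarrow> ('q \<Rightarrow> 'e \<Rightarrow> 'q option) \<Rightarrow> 'q set \<Rightarrow> ('q \<Rightarrow> 'e \<Rightarrow> 'q option) \<Rightarrow> bool" where
  "sub_automaton QH dH Q d \<longleftrightarrow> QH \<subseteq> Q \<and> (\<forall>q e q'. dH q e = Some q' \<longrightarrow> d q e = Some q')"

fun run :: "('q \<Rightarrow> 'e \<Rightarrow> 'q option) \<Rightarrow> 'q \<Rightarrow> 'e list \<Rightarrow> 'q option" where
  "run d q [] = Some q"
| "run d q (e # s) = (case d q e of None \<Rightarrow> None | Some q' \<Rightarrow> run d q' s)"

definition lang :: "('q \<Rightarrow> 'e \<Rightarrow> 'q option) \<Rightarrow> 'q \<Rightarrow> 'e list set" where
  "lang d q0 = {s. run d q0 s \<noteq> None}"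

definition Gam :: "('q \<Rightarrow> 'e \<Rightarrow> 'q option) \<Rightarrow> 'q \<Rightarrow> 'e set" where
  "Gam d q = {e. d q e \<noteq> None}"

datatype 'q aug_state = Orig 'q | Dis

fun delta_aug :: "'e set \<Rightarrow> ('q \<Rightarrow> 'e \<Rightarrow> 'q option) \<Rightarrow> nat \<Rightarrow> 'q aug_state \<Rightarrow> 'e \<Rightarrow> 'q aug_state option" where
  "delta_aug Sig dH N (Orig q) e =
     (if dH q e \<noteq> None then map_option Orig (dH q e)
      else if e \<in> Sig \<and> (\<exists>s' q'. s' \<in> lists Sig \<and> length s' \<le> N \<and> run dH q s' = Some q' \<and> dH q' e \<noteq> None)
      then Some Dis else None)"
| "delta_aug Sig dH N Dis e = None"

definition lang_aug :: "'e set \<Rightarrow> ('q \<Rightarrow> 'e \<Rightarrow> 'q option) \<Rightarrow> 'q \<Rightarrow> nat \<Rightarrow> 'e list set" where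
  "lang_aug Sig dH q0 N = lang (delta_aug Sig dH N) (Orig q0)"

definition Gam_aug :: "'e set \<Rightarrow> ('q \<Rightarrow> 'e \<Rightarrow> 'q option) \<Rightarrow> nat \<Rightarrow> 'q \<Rightarrow> 'e set" where
  "Gam_aug Sig dH N q = Gam (delta_aug Sig dH N) (Orig q)"

definition proj :: "'e set \<Rightarrow> 'e list \<Rightarrow> 'e list" where
  "proj So s = filter (\<lambda>e. e \<in> So) s"

text \<open>s_{-m}: prefix of length max 0 (|s| - m).\<close>
definition trunc :: "'e list \<Rightarrow> nat \<Rightarrow> 'e list" where
  "trunc s m = take (length s - m) s"

definition Theta :: "'e set \<Rightarrow> nat \<Rightarrow> 'e list \<Rightarrow> 'e list set" where
  "Theta So No s = {proj So (trunc s m) | m. m \<le> No}"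

definition Ic :: "nat \<Rightarrow> (nat \<Rightarrow> 'e set) \<Rightarrow> 'e \<Rightarrow> nat set" where
  "Ic n Sc \<sigma> = {i \<in> {1..n}. \<sigma> \<in> Sc i}"

text \<open>Tuples (s_i)_{i in Ic} are represented by functions nat => 'e list; only the
  values on Ic matter.\<close>
definition Tconf :: "'e set \<Rightarrow> nat set \<Rightarrow> (nat \<Rightarrow> 'e set) \<Rightarrow> (nat \<Rightarrow> nat) \<Rightarrow> 'e list \<Rightarrow> (nat \<Rightarrow> 'e list) set" where
  "Tconf Sig I So No s = {f. \<forall>i\<in>I. f i \<in> lists Sig \<and> proj (So i) (f i) \<in> Theta (So i) (No i) s}"

text \<open>States are triples (q, qs, d); qs is a tuple indexed by I (values outside I are
  irrelevant and never change).\<close>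

definition Xi :: "('q \<Rightarrow> 'e \<Rightarrow> 'q option) \<Rightarrow> 'q \<Rightarrow> nat set \<Rightarrow> (nat \<Rightarrow> 'e set) \<Rightarrow> ('q \<times> (nat \<Rightarrow> 'q)) set" where
  "Xi dH q0 I So = {(q, qs). \<exists>t. run dH q0 t = Some q \<and>
      (\<forall>i\<in>I. \<exists>si. run dH q0 si = Some (qs i) \<and> proj (So i) si = proj (So i) t)}"

text \<open>i is in case D1 or D3 (tracks e) / D2 or D4 (moves alone on e).\<close>
definition tracks :: "'e set \<Rightarrow> ('q \<Rightarrow> 'e \<Rightarrow> 'q option) \<Rightarrow> (nat \<Rightarrow> 'e set) \<Rightarrow> (nat \<Rightarrow> nat) \<Rightarrow> 'e \<Rightarrow> nat
     \<Rightarrow> (nat \<Rightarrow> 'q) \<Rightarrow> nat \<Rightarrow> 'e \<Rightarrow> nat \<Rightarrow> bool" where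
  "tracks Sig dH So No \<sigma> N qs d e i \<longleftrightarrow>
     ((N - d > No i \<and> e \<in> So i) \<or>
      (N - d \<le> No i \<and> \<sigma> \<notin> Gam_aug Sig dH (No i) (qs i) \<and> e \<in> So i))"

definition free :: "'e set \<Rightarrow> ('q \<Rightarrow> 'e \<Rightarrow> 'q option) \<Rightarrow> (nat \<Rightarrow> 'e set) \<Rightarrow> (nat \<Rightarrow> nat) \<Rightarrow> 'e \<Rightarrow> nat
     \<Rightarrow> (nat \<Rightarrow> 'q) \<Rightarrow> nat \<Rightarrow> 'e \<Rightarrow> nat \<Rightarrow> bool" where
  "free Sig dH So No \<sigma> N qs d e i \<longleftrightarrow>
     ((N - d > No i \<and> e \<in> Sig - So i) \<or>
      (N - d \<le> No i \<and> \<sigma> \<notin> Gam_aug Sig dH (No i) (qs i) \<and> e \<in> Sig - So i))"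

inductive_set verifier_reach ::
  "'e set \<Rightarrow> ('q \<Rightarrow> 'e \<Rightarrow> 'q option) \<Rightarrow> 'q \<Rightarrow> nat set \<Rightarrow> (nat \<Rightarrow> 'e set) \<Rightarrow> (nat \<Rightarrow> nat) \<Rightarrow> 'e \<Rightarrow> nat
     \<Rightarrow> ('q \<times> (nat \<Rightarrow> 'q) \<times> nat) set"
  for Sig dH q0 I So No \<sigma> N where
  init: "(q, qs) \<in> Xi dH q0 I So \<Longrightarrow> (q, qs, 0) \<in> verifier_reach Sig dH q0 I So No \<sigma> N"
| type1: "\<lbrakk> (q, qs, d) \<in> verifier_reach Sig dH q0 I So No \<sigma> N; e \<in> Sig; d + 1 \<le> N;
           dH q e = Some q';
           \<forall>i\<in>I. tracks Sig dH So No \<sigma> N qs d e i \<longrightarrow> dH (qs i) e \<noteq> None \<rbrakk>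
   \<Longrightarrow> (q', (\<lambda>i. if i \<in> I \<and> tracks Sig dH So No \<sigma> N qs d e i then the (dH (qs i) e) else qs i), d + 1)
        \<in> verifier_reach Sig dH q0 I So No \<sigma> N"
| type2: "\<lbrakk> (q, qs, d) \<in> verifier_reach Sig dH q0 I So No \<sigma> N; e \<in> Sig; i \<in> I;
           free Sig dH So No \<sigma> N qs d e i; dH (qs i) e = Some qi' \<rbrakk>
   \<Longrightarrow> (q, qs(i := qi'), d) \<in> verifier_reach Sig dH q0 I So No \<sigma> N"

end

theory Submission
  imports Defs
begin

lemma run_append: "run d q (a @ b) = (case run d q a of None \<Rightarrow> None | Some q' \<Rightarrow> run d q' b)"
  by (induction a arbitrary: q) (auto split: option.splits)

lemma run_snoc: "run d q a = Some p \<Longrightarrow> d p e = Some p' \<Longrightarrow> run d q (a @ [e]) = Some p'"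
  by (simp add: run_append)

lemma run_lists: "dfa Q Sig d q0 \<Longrightarrow> run d q s = Some q' \<Longrightarrow> s \<in> lists Sig"
  by (induction s arbitrary: q) (auto simp: dfa_def split: option.splits)

lemma run_sub: "sub_automaton QH dH Q d \<Longrightarrow> run dH q s = Some q' \<Longrightarrow> run d q s = Some q'"
  by (induction s arbitrary: q) (auto simp: sub_automaton_def split: option.splits)

lemma run_aug_orig: "run dH q s = Some q' \<Longrightarrow> run (delta_aug Sig dH M) (Orig q) s = Some (Orig q')"
  by (induction s arbitrary: q) (auto split: option.splits)

lemma run_aug_Dis: "run (delta_aug Sig dH M) Dis s = Some x \<Longrightarrow> x = Dis"
  by (cases s) auto

lemma run_aug_cases: "run (delta_aug Sig dH M) (Orig q) s = Some x \<Longrightarrow>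
   x = Dis \<or> (\<exists>q'. x = Orig q' \<and> run dH q s = Some q')"
proof (induction s arbitrary: q)
  case Nil then show ?case by simp
next
  case (Cons e s)
  show ?case
  proof (cases "dH q e")
    case None
    with Cons.prems show ?thesis by (auto split: if_splits dest: run_aug_Dis)
  next
    case (Some q1)
    with Cons.prems have "run (delta_aug Sig dH M) (Orig q1) s = Some x" by simp
    from Cons.IH[OF this] Some show ?thesis by auto
  qed
qed

lemma lang_aug_snocD: "w @ [\<sigma>] \<in> lang_aug Sig dH q0 M \<Longrightarrow>
   \<exists>p. run dH q0 w = Some p \<and> \<sigma> \<in> Gam_aug Sig dH M p"
proof -
  assume a: "w @ [\<sigma>] \<in> lang_aug Sig dH q0 M"
  then obtain x where x: "run (delta_aug Sig dH M) (Orig q0) w = Some x"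
    and y: "run (delta_aug Sig dH M) x [\<sigma>] \<noteq> None"
    by (auto simp: lang_aug_def lang_def run_append split: option.splits)
  have "x \<noteq> Dis" using y by auto
  with run_aug_cases[OF x] obtain p where "x = Orig p" "run dH q0 w = Some p" by auto
  with y have "delta_aug Sig dH M (Orig p) \<sigma> \<noteq> None"
    by (auto simp del: delta_aug.simps split: option.splits)
  then show ?thesis using \<open>run dH q0 w = Some p\<close> by (auto simp: Gam_aug_def Gam_def simp del: delta_aug.simps)
qed

lemma lang_aug_snocI: "run dH q0 w = Some p \<Longrightarrow> \<sigma> \<in> Gam_aug Sig dH M p \<Longrightarrow>
   w @ [\<sigma>] \<in> lang_aug Sig dH q0 M"
proof -
  assume r: "run dH q0 w = Some p" and g: "\<sigma> \<in> Gam_aug Sig dH M p"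
  from g obtain x where x: "delta_aug Sig dH M (Orig p) \<sigma> = Some x"
    by (auto simp: Gam_aug_def Gam_def simp del: delta_aug.simps)
  have "run (delta_aug Sig dH M) (Orig q0) (w @ [\<sigma>]) = Some x"
    using run_aug_orig[OF r, of Sig M] x by (simp add: run_append del: delta_aug.simps)
  then show ?thesis by (simp add: lang_aug_def lang_def del: delta_aug.simps)
qed

lemma proj_append[simp]: "proj S (a @ b) = proj S a @ proj S b"
  by (simp add: proj_def)

lemma proj_Cons: "proj S (x # r) = (if x \<in> S then x # proj S r else proj S r)"
  by (simp add: proj_def)

lemma proj_Nil[simp]: "proj S [] = []"
  by (simp add: proj_def)

lemma track_lemma:
  assumes "proj S (p @ r) = a @ e # c" "proj S p = a" "r = [] \<or> hd r \<in> S"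
  shows "r \<noteq> [] \<and> hd r = e"
proof -
  have pr: "proj S r = e # c" using assms(1,2) by simp
  then have "r \<noteq> []" by auto
  then obtain x r' where r: "r = x # r'" by (cases r) auto
  with assms(3) have "x \<in> S" by simp
  with pr r show ?thesis by (simp add: proj_Cons)
qed

lemma notrack_lemma:
  assumes "proj S (p @ r) @ c = proj S p" "r = [] \<or> hd r \<in> S"
  shows "r = []"
proof -
  have "proj S p @ (proj S r @ c) = proj S p @ []" using assms(1) by simp
  then have "proj S r @ c = []" by (simp only: same_append_eq)
  then have "proj S r = []" by simp
  then show ?thesis using assms(2)
    by (cases r) (auto simp: proj_Cons split: if_splits)
qed


lemma trunc_snoc: "trunc (s @ [e]) (Suc m) = trunc s m"
  by (simp add: trunc_def)

lemma reach_inv: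
  assumes H: "dfa QH Sig dH q0"
  shows "(q, qs, k) \<in> verifier_reach Sig dH q0 I So No \<sigma> N \<Longrightarrow>
    (\<exists>s. run dH q0 s = Some q \<and> length s \<ge> k \<and>
      (\<forall>i\<in>I. \<exists>si. run dH q0 si = Some (qs i) \<and>
         (proj (So i) si = proj (So i) s \<or>
          (N - k \<le> No i \<and> \<sigma> \<in> Gam_aug Sig dH (No i) (qs i) \<and>
           (\<exists>m. m + N \<le> k + No i \<and> proj (So i) si = proj (So i) (trunc s m))))))"
proof (induction rule: verifier_reach.induct)
  case (init q qs)
  then obtain t where "run dH q0 t = Some q" "\<forall>i\<in>I. \<exists>si. run dH q0 si = Some (qs i) \<and>
                     proj (So i) si = proj (So i) t" by (auto simp: Xi_def)
  then show ?case by blast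
next
  case (type1 q qs d e q')
  from type1.IH obtain s where s: "run dH q0 s = Some q" "length s \<ge> d"
    and si: "\<forall>i\<in>I. \<exists>si. run dH q0 si = Some (qs i) \<and>
         (proj (So i) si = proj (So i) s \<or>
          (N - d \<le> No i \<and> \<sigma> \<in> Gam_aug Sig dH (No i) (qs i) \<and>
           (\<exists>m. m + N \<le> d + No i \<and> proj (So i) si = proj (So i) (trunc s m))))" by blast
  let ?qs' = "\<lambda>i. if i \<in> I \<and> tracks Sig dH So No \<sigma> N qs d e i then the (dH (qs i) e) else qs i"
  have "run dH q0 (s @ [e]) = Some q'" using s type1.hyps by (simp add: run_snoc)
  moreover have "length (s @ [e]) \<ge> d + 1" using s by simp
  moreover have "\<forall>i\<in>I. \<exists>si. run dH q0 si = Some (?qs' i) \<and>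
         (proj (So i) si = proj (So i) (s @ [e]) \<or>
          (N - (d+1) \<le> No i \<and> \<sigma> \<in> Gam_aug Sig dH (No i) (?qs' i) \<and>
           (\<exists>m. m + N \<le> (d+1) + No i \<and> proj (So i) si = proj (So i) (trunc (s @ [e]) m))))"
  proof
    fix i assume i: "i \<in> I"
    from si i obtain si where r: "run dH q0 si = Some (qs i)" and
      c: "proj (So i) si = proj (So i) s \<or>
          (N - d \<le> No i \<and> \<sigma> \<in> Gam_aug Sig dH (No i) (qs i) \<and>
           (\<exists>m. m + N \<le> d + No i \<and> proj (So i) si = proj (So i) (trunc s m)))" by blast
    show "\<exists>si. run dH q0 si = Some (?qs' i) \<and>
         (proj (So i) si = proj (So i) (s @ [e]) \<or>
          (N - (d+1) \<le> No i \<and> \<sigma> \<in> Gam_aug Sig dH (No i) (?qs' i) \<and>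
           (\<exists>m. m + N \<le> (d+1) + No i \<and> proj (So i) si = proj (So i) (trunc (s @ [e]) m))))"
    proof (cases "tracks Sig dH So No \<sigma> N qs d e i")
      case True
      with type1.hyps i obtain p where p: "dH (qs i) e = Some p" by blast
      have "run dH q0 (si @ [e]) = Some p" using r p by (simp add: run_snoc)
      moreover have "proj (So i) si = proj (So i) s" using c True by (auto simp: tracks_def)
      ultimately show ?thesis using True i p by (auto simp: proj_def)
    next
      case False
      then have q': "?qs' i = qs i" by simp
      show ?thesis
      proof (cases "proj (So i) si = proj (So i) s \<and> e \<notin> So i")
        case True
        then show ?thesis using r q' by (auto simp: proj_def)
      next
        case F2: False
        have fr: "N - d \<le> No i \<and> \<sigma> \<in> Gam_aug Sig dH (No i) (qs i) \<and>
           (\<exists>m. m + N \<le> d + No i \<and> proj (So i) si = proj (So i) (trunc s m))"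
        proof (cases "proj (So i) si = proj (So i) s")
          case True
          with F2 have "e \<in> So i" by simp
          with False have "N - d \<le> No i" "\<sigma> \<in> Gam_aug Sig dH (No i) (qs i)"
            by (auto simp: tracks_def)
          moreover have "0 + N \<le> d + No i" using \<open>N - d \<le> No i\<close> by simp
          moreover have "proj (So i) si = proj (So i) (trunc s 0)" using True by (simp add: trunc_def)
          ultimately show ?thesis by blast
        next
          case False
          then show ?thesis using c by blast
        qed
        then obtain m where m: "m + N \<le> d + No i" "proj (So i) si = proj (So i) (trunc s m)" by blast
        have "Suc m + N \<le> (d+1) + No i" using m by simp
        moreover have "proj (So i) si = proj (So i) (trunc (s @ [e]) (Suc m))"
          using m by (simp add: trunc_snoc)
        moreover have "N - (d+1) \<le> No i" using fr by linarith
        moreover have "\<sigma> \<in> Gam_aug Sig dH (No i) (?qs' i)" using fr q' by simp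
        moreover have "run dH q0 si = Some (?qs' i)" using r q' by simp
        ultimately show ?thesis by blast
      qed
    qed
  qed
  ultimately show ?case by blast
next
  case (type2 q qs d e i qi')
  from type2.IH obtain s where s: "run dH q0 s = Some q" "length s \<ge> d"
    and si: "\<forall>i\<in>I. \<exists>si. run dH q0 si = Some (qs i) \<and>
         (proj (So i) si = proj (So i) s \<or>
          (N - d \<le> No i \<and> \<sigma> \<in> Gam_aug Sig dH (No i) (qs i) \<and>
           (\<exists>m. m + N \<le> d + No i \<and> proj (So i) si = proj (So i) (trunc s m))))" by blast
  from si type2.hyps obtain si0 where r0: "run dH q0 si0 = Some (qs i)" and
      c0: "proj (So i) si0 = proj (So i) s" by (auto simp: free_def)
  have "run dH q0 (si0 @ [e]) = Some qi'" using r0 type2.hyps by (simp add: run_snoc)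
  moreover have "proj (So i) (si0 @ [e]) = proj (So i) s" using c0 type2.hyps
    by (auto simp: free_def proj_def)
  ultimately have "\<exists>si. run dH q0 si = Some ((qs(i := qi')) i) \<and> proj (So i) si = proj (So i) s"
    by auto
  then have "\<forall>j\<in>I. \<exists>si. run dH q0 si = Some ((qs(i := qi')) j) \<and>
         (proj (So j) si = proj (So j) s \<or>
          (N - d \<le> No j \<and> \<sigma> \<in> Gam_aug Sig dH (No j) ((qs(i := qi')) j) \<and>
           (\<exists>m. m + N \<le> d + No j \<and> proj (So j) si = proj (So j) (trunc s m))))"
    using si by auto
  then show ?case using s by blast
qed


lemma proj_prefix: "proj S w = a @ b \<Longrightarrow> \<exists>j\<le>length w. proj S (take j w) = a"
proof (induction w arbitrary: a)
  case Nil then show ?case by simp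
next
  case (Cons x w)
  show ?case
  proof (cases a)
    case Nil then show ?thesis by (intro exI[of _ 0]) simp
  next
    case (Cons y a')
    show ?thesis
    proof (cases "x \<in> S")
      case True
      with Cons.prems Cons have "proj S w = a' @ b" "x = y" by (auto simp: proj_Cons)
      from Cons.IH[OF this(1)] obtain j where "j \<le> length w" "proj S (take j w) = a'" by blast
      then show ?thesis using True \<open>x = y\<close> Cons by (intro exI[of _ "Suc j"]) (auto simp: proj_Cons)
    next
      case False
      with Cons.prems have "proj S w = a @ b" by (auto simp: proj_Cons)
      from Cons.IH[OF this] obtain j where "j \<le> length w" "proj S (take j w) = a" by blast
      then show ?thesis using False by (intro exI[of _ "Suc j"]) (auto simp: proj_Cons)
    qed
  qed
qed

lemma run_prefix: "run d q (a @ b) \<noteq> None \<Longrightarrow> \<exists>p. run d q a = Some p"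
  by (auto simp: run_append split: option.splits)

lemma take_split: "j \<le> n \<Longrightarrow> take n u = take j u @ drop j (take n u)"
  by (metis append_take_drop_id min.absorb1 take_take)

lemma hard:
  assumes H: "dfa QH Sig dH q0"
  and finI: "finite I"
  and s: "run dH q0 (t @ u) = Some qe" and lu: "length u = N"
  and w: "\<And>i. i\<in>I \<Longrightarrow> w i \<in> lists Sig \<and> m i \<le> No i \<and> No i \<le> N \<and>
            proj (So i) (w i) = proj (So i) (t @ take (N - m i) u) \<and>
            run dH q0 (w i) = Some (pe i) \<and> \<sigma> \<in> Gam_aug Sig dH (No i) (pe i)"
  shows "\<exists>qs. (qe, qs, N) \<in> verifier_reach Sig dH q0 I So No \<sigma> N \<and>
            (\<forall>i\<in>I. \<sigma> \<in> Gam_aug Sig dH (No i) (qs i))"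
proof -
  define R where "R = verifier_reach Sig dH q0 I So No \<sigma> N"
  define fr where "fr = (\<lambda>k i qs. N - k \<le> No i \<and> \<sigma> \<in> Gam_aug Sig dH (No i) (qs i))"
  define Good where "Good = (\<lambda>q qs k pl. run dH q0 (t @ take k u) = Some q \<and>
     (\<forall>i\<in>I. pl i \<le> length (w i) \<and> run dH q0 (take (pl i) (w i)) = Some (qs i) \<and>
        (proj (So i) (take (pl i) (w i)) = proj (So i) (t @ take k u) \<or> fr k i qs)))"
  define Good' where "Good' = (\<lambda>qs k pl. \<forall>i\<in>I. \<not> fr k i qs \<longrightarrow>
     (drop (pl i) (w i) = [] \<or> hd (drop (pl i) (w i)) \<in> So i))"
  have tuSig: "t @ u \<in> lists Sig" using run_lists[OF H s] .

  have cons: "\<And>q qs k pl. (q,qs,k) \<in> R \<Longrightarrow> Good q qs k pl \<Longrightarrow> (\<Sum>i\<in>I. length (w i) - pl i) = M \<Longrightarrow>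
     \<exists>qs' pl'. (q,qs',k) \<in> R \<and> Good q qs' k pl' \<and> Good' qs' k pl'" for M
  proof (induction M rule: less_induct)
    case (less M q qs k pl)
    show ?case
    proof (cases "Good' qs k pl")
      case True with less.prems show ?thesis by blast
    next
      case False
      then obtain i where i: "i \<in> I" "\<not> fr k i qs" "drop (pl i) (w i) \<noteq> []"
        "hd (drop (pl i) (w i)) \<notin> So i" unfolding Good'_def by blast
      define e where "e = hd (drop (pl i) (w i))"
      have lt: "pl i < length (w i)" using i(3) by simp
      have tk: "take (Suc (pl i)) (w i) = take (pl i) (w i) @ [e]"
        using take_hd_drop[OF lt] e_def by simp
      have "e \<in> set (w i)" using lt e_def by (simp add: hd_drop_conv_nth)
      then have eSig: "e \<in> Sig" using w[OF i(1)] by auto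
      have gi: "pl i \<le> length (w i)" "run dH q0 (take (pl i) (w i)) = Some (qs i)"
        "proj (So i) (take (pl i) (w i)) = proj (So i) (t @ take k u) \<or> fr k i qs"
        using less.prems(2) i(1) unfolding Good_def by blast+
      have pr: "proj (So i) (take (pl i) (w i)) = proj (So i) (t @ take k u)" using gi(3) i(2) by blast
      have "run dH q0 (take (Suc (pl i)) (w i) @ drop (Suc (pl i)) (w i)) \<noteq> None"
        using w[OF i(1)] by simp
      then obtain qi' where qi': "run dH q0 (take (Suc (pl i)) (w i)) = Some qi'"
        by (metis run_prefix)
      then have dq: "dH (qs i) e = Some qi'" using gi(2) tk by (simp add: run_append split: option.splits)
      have fre: "free Sig dH So No \<sigma> N qs k e i"
        using i(2) i(4) eSig unfolding free_def fr_def e_def by auto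
      have R': "(q, qs(i := qi'), k) \<in> R"
        using less.prems(1) eSig i(1) fre dq unfolding R_def by (rule verifier_reach.type2)
      define pl' where "pl' = pl(i := Suc (pl i))"
      have G': "Good q (qs(i := qi')) k pl'"
        unfolding Good_def
      proof (rule conjI)
        show "run dH q0 (t @ take k u) = Some q" using less.prems(2) unfolding Good_def by blast
      next
        show "\<forall>j\<in>I. pl' j \<le> length (w j) \<and> run dH q0 (take (pl' j) (w j)) = Some ((qs(i := qi')) j) \<and>
          (proj (So j) (take (pl' j) (w j)) = proj (So j) (t @ take k u) \<or> fr k j (qs(i := qi')))"
        proof
        fix j assume j: "j \<in> I"
        show "pl' j \<le> length (w j) \<and> run dH q0 (take (pl' j) (w j)) = Some ((qs(i := qi')) j) \<and>
          (proj (So j) (take (pl' j) (w j)) = proj (So j) (t @ take k u) \<or> fr k j (qs(i := qi')))"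
        proof (cases "j = i")
          case True
          then show ?thesis using lt qi' tk pr i(4) e_def unfolding pl'_def
            by (auto simp: proj_def)
        next
          case False
          then show ?thesis using less.prems(2) j unfolding Good_def pl'_def fr_def by auto
        qed
        qed
      qed
      have "(\<Sum>j\<in>I. length (w j) - pl' j) < (\<Sum>j\<in>I. length (w j) - pl j)"
      proof (rule sum_strict_mono_ex1[OF finI])
        show "\<forall>x\<in>I. length (w x) - pl' x \<le> length (w x) - pl x" unfolding pl'_def by auto
        show "\<exists>a\<in>I. length (w a) - pl' a < length (w a) - pl a"
          using i(1) lt unfolding pl'_def by (intro bexI[of _ i]) auto
      qed
      then have "(\<Sum>j\<in>I. length (w j) - pl' j) < M" using less.prems(3) by simp
      from less.IH[OF this R' G' refl] show ?thesis .
    qed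
  qed

  have step: "\<And>q qs k pl. k < N \<Longrightarrow> (q,qs,k) \<in> R \<Longrightarrow> Good q qs k pl \<Longrightarrow> Good' qs k pl \<Longrightarrow>
      \<exists>q' qs' pl'. (q',qs',k+1) \<in> R \<and> Good q' qs' (k+1) pl'"
  proof -
    fix q qs k pl assume k: "k < N" and r: "(q,qs,k) \<in> R" and g: "Good q qs k pl" and g': "Good' qs k pl"
    define e where "e = u ! k"
    have tku: "take (Suc k) u = take k u @ [e]" using k lu by (simp add: e_def take_Suc_conv_app_nth)
    have "e \<in> set u" using k lu e_def by simp
    then have eSig: "e \<in> Sig" using tuSig by auto
    have rq: "run dH q0 (t @ take k u) = Some q" using g unfolding Good_def by blast
    have "run dH q0 ((t @ take (Suc k) u) @ drop (Suc k) u) \<noteq> None" using s by simp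
    then obtain q' where q'1: "run dH q0 (t @ take (Suc k) u) = Some q'" by (metis run_prefix)
    then have q'2: "dH q e = Some q'" using rq tku by (simp add: run_append split: option.splits)
    let ?T = "\<lambda>i. tracks Sig dH So No \<sigma> N qs k e i"
    have claim: "\<exists>p. dH (qs i) e = Some p \<and> run dH q0 (take (Suc (pl i)) (w i)) = Some p \<and>
       Suc (pl i) \<le> length (w i) \<and> take (Suc (pl i)) (w i) = take (pl i) (w i) @ [e] \<and>
       proj (So i) (take (pl i) (w i)) = proj (So i) (t @ take k u) \<and> e \<in> So i"
      if i: "i \<in> I" "?T i" for i
    proof -
      have eS: "e \<in> So i" using i(2) unfolding tracks_def by auto
      have nfr: "\<not> fr k i qs" using i(2) unfolding tracks_def fr_def by auto
      have gi: "pl i \<le> length (w i)" "run dH q0 (take (pl i) (w i)) = Some (qs i)"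
        "proj (So i) (take (pl i) (w i)) = proj (So i) (t @ take k u) \<or> fr k i qs"
        using g i(1) unfolding Good_def by blast+
      have pr: "proj (So i) (take (pl i) (w i)) = proj (So i) (t @ take k u)" using gi(3) nfr by blast
      have D: "drop (pl i) (w i) = [] \<or> hd (drop (pl i) (w i)) \<in> So i" using g' i(1) nfr
        unfolding Good'_def by blast
      have wi: "w i \<in> lists Sig" "m i \<le> No i" "No i \<le> N"
            "proj (So i) (w i) = proj (So i) (t @ take (N - m i) u)"
            "run dH q0 (w i) = Some (pe i)" "\<sigma> \<in> Gam_aug Sig dH (No i) (pe i)"
        using w[OF i(1)] by blast+
      have nd: "drop (pl i) (w i) \<noteq> [] \<and> hd (drop (pl i) (w i)) = e"
      proof (cases "k < N - m i")
        case True
        then have hs: "take (N - m i) u = take (Suc k) u @ drop (Suc k) (take (N - m i) u)"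
          by (intro take_split) simp
        have hp: "proj (So i) (take (N - m i) u) = proj (So i) (take k u) @ e # proj (So i) (drop (Suc k) (take (N - m i) u))"
          using arg_cong[OF hs, of "proj (So i)"] tku eS by (simp add: proj_Cons)
        have "proj (So i) (take (pl i) (w i) @ drop (pl i) (w i)) =
            proj (So i) (t @ take k u) @ e # proj (So i) (drop (Suc k) (take (N - m i) u))"
          using wi(4) hp by simp
        from track_lemma[OF this pr D] show ?thesis .
      next
        case False
        then have "N - k \<le> No i" using wi(2) by linarith
        then have sg: "\<sigma> \<notin> Gam_aug Sig dH (No i) (qs i)" using i(2) unfolding tracks_def by auto
        have hs2: "take k u = take (N - m i) u @ drop (N - m i) (take k u)"
          using False by (intro take_split) simp
        have "proj (So i) (take (pl i) (w i) @ drop (pl i) (w i)) @ proj (So i) (drop (N - m i) (take k u))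
            = proj (So i) t @ proj (So i) (take (N - m i) u) @ proj (So i) (drop (N - m i) (take k u))"
          using wi(4) by simp
        also have "\<dots> = proj (So i) (t @ take k u)"
          using arg_cong[OF hs2, of "proj (So i)"] by simp
        also have "\<dots> = proj (So i) (take (pl i) (w i))" using pr by simp
        finally have "proj (So i) (take (pl i) (w i) @ drop (pl i) (w i)) @ proj (So i) (drop (N - m i) (take k u))
            = proj (So i) (take (pl i) (w i))" .
        from notrack_lemma[OF this D] have "drop (pl i) (w i) = []" .
        then have "take (pl i) (w i) = w i" by simp
        then have "qs i = pe i" using gi(2) wi(5) by simp
        with sg wi(6) show ?thesis by simp
      qed
      then have lt: "pl i < length (w i)" by simp
      have tk: "take (Suc (pl i)) (w i) = take (pl i) (w i) @ [e]"
        using take_hd_drop[OF lt] nd by simp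
      have "run dH q0 (take (Suc (pl i)) (w i) @ drop (Suc (pl i)) (w i)) \<noteq> None"
        using wi(5) by simp
      then obtain p where p: "run dH q0 (take (Suc (pl i)) (w i)) = Some p"
        by (metis run_prefix)
      then have "dH (qs i) e = Some p" using gi(2) tk by (simp add: run_append split: option.splits)
      then show ?thesis using p lt tk pr eS by auto
    qed
    define qs' where "qs' = (\<lambda>i. if i \<in> I \<and> ?T i then the (dH (qs i) e) else qs i)"
    define pl' where "pl' = (\<lambda>i. if i \<in> I \<and> ?T i then Suc (pl i) else pl i)"
    have "(q', qs', k + 1) \<in> R"
      unfolding qs'_def R_def
    proof (rule verifier_reach.type1)
      show "(q, qs, k) \<in> verifier_reach Sig dH q0 I So No \<sigma> N" using r R_def by simp
      show "e \<in> Sig" by fact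
      show "k + 1 \<le> N" using k by simp
      show "dH q e = Some q'" by fact
      show "\<forall>i\<in>I. ?T i \<longrightarrow> dH (qs i) e \<noteq> None" using claim by blast
    qed
    moreover have "Good q' qs' (k+1) pl'"
      unfolding Good_def
    proof (rule conjI)
      show "run dH q0 (t @ take (k + 1) u) = Some q'" using q'1 by simp
    next
      show "\<forall>i\<in>I. pl' i \<le> length (w i) \<and> run dH q0 (take (pl' i) (w i)) = Some (qs' i) \<and>
          (proj (So i) (take (pl' i) (w i)) = proj (So i) (t @ take (k + 1) u) \<or> fr (k + 1) i qs')"
      proof
      fix i assume i: "i \<in> I"
      have gi: "pl i \<le> length (w i)" "run dH q0 (take (pl i) (w i)) = Some (qs i)"
        "proj (So i) (take (pl i) (w i)) = proj (So i) (t @ take k u) \<or> fr k i qs"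
        using g i unfolding Good_def by blast+
      show "pl' i \<le> length (w i) \<and> run dH q0 (take (pl' i) (w i)) = Some (qs' i) \<and>
          (proj (So i) (take (pl' i) (w i)) = proj (So i) (t @ take (k + 1) u) \<or> fr (k + 1) i qs')"
      proof (cases "?T i")
        case True
        from claim[OF i True] obtain p where p: "dH (qs i) e = Some p"
          "run dH q0 (take (Suc (pl i)) (w i)) = Some p" "Suc (pl i) \<le> length (w i)"
          "take (Suc (pl i)) (w i) = take (pl i) (w i) @ [e]"
          "proj (So i) (take (pl i) (w i)) = proj (So i) (t @ take k u)" "e \<in> So i" by blast
        show ?thesis using p i True tku unfolding qs'_def pl'_def by (simp add: proj_def)
      next
        case False
        then have e1: "qs' i = qs i" "pl' i = pl i" unfolding qs'_def pl'_def by auto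
        show ?thesis
        proof (cases "proj (So i) (take (pl i) (w i)) = proj (So i) (t @ take k u) \<and> e \<notin> So i")
          case True
          then show ?thesis using e1 gi tku by (simp add: proj_def)
        next
          case F2: False
          have "fr k i qs"
          proof (cases "proj (So i) (take (pl i) (w i)) = proj (So i) (t @ take k u)")
            case True
            with F2 have "e \<in> So i" by simp
            with False show ?thesis unfolding tracks_def fr_def by auto
          next
            case False
            with gi(3) show ?thesis by blast
          qed
          then have "fr (k+1) i qs'" using e1 unfolding fr_def by auto
          then show ?thesis using e1 gi by simp
        qed
      qed
      qed
    qed
    ultimately show "\<exists>q' qs' pl'. (q',qs',k+1) \<in> R \<and> Good q' qs' (k+1) pl'" by blast
  qed

  have main: "k \<le> N \<Longrightarrow> \<exists>q qs pl. (q,qs,k) \<in> R \<and> Good q qs k pl \<and> Good' qs k pl" for k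
  proof (induction k)
    case 0
    have "run dH q0 (t @ u) \<noteq> None" using s by simp
    then obtain qt where qt: "run dH q0 t = Some qt" by (metis run_prefix)
    have ex: "\<exists>j\<le>length (w i). proj (So i) (take j (w i)) = proj (So i) t" if i: "i \<in> I" for i
      using w[OF i] by (intro proj_prefix[where b = "proj (So i) (take (N - m i) u)"]) simp
    define pl0 where "pl0 = (\<lambda>i. SOME j. j\<le>length (w i) \<and> proj (So i) (take j (w i)) = proj (So i) t)"
    have pl0: "pl0 i \<le> length (w i) \<and> proj (So i) (take (pl0 i) (w i)) = proj (So i) t" if "i \<in> I" for i
      unfolding pl0_def using someI_ex[OF ex[OF that]] .
    have runs: "\<exists>p. run dH q0 (take (pl0 i) (w i)) = Some p" if "i \<in> I" for i
    proof -
      have "run dH q0 (take (pl0 i) (w i) @ drop (pl0 i) (w i)) \<noteq> None" using w[OF that] by simp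
      then show ?thesis by (metis run_prefix)
    qed
    define qs0 where "qs0 = (\<lambda>i. the (run dH q0 (take (pl0 i) (w i))))"
    have rq: "run dH q0 (take (pl0 i) (w i)) = Some (qs0 i)" if "i \<in> I" for i
      using runs[OF that] unfolding qs0_def by auto
    have "(qt, qs0) \<in> Xi dH q0 I So"
      unfolding Xi_def using qt rq pl0 by blast
    then have r0: "(qt, qs0, 0) \<in> R" unfolding R_def by (rule verifier_reach.init)
    have g0: "Good qt qs0 0 pl0" unfolding Good_def using qt rq pl0 by auto
    from cons[OF r0 g0 refl] show ?case by blast
  next
    case (Suc k)
    then obtain q qs pl where "(q,qs,k) \<in> R" "Good q qs k pl" "Good' qs k pl" by auto
    from step[OF _ this] Suc.prems obtain q' qs' pl' where "(q',qs',k+1) \<in> R" "Good q' qs' (k+1) pl'"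
      by auto
    from cons[OF this refl] show ?case by auto
  qed
  from main[OF order_refl] obtain q qs pl where r: "(q,qs,N) \<in> R" and g: "Good q qs N pl"
    and g': "Good' qs N pl" by blast
  have "q = qe" using g s lu unfolding Good_def by simp
  moreover have "\<forall>i\<in>I. \<sigma> \<in> Gam_aug Sig dH (No i) (qs i)"
  proof
    fix i assume i: "i \<in> I"
    show "\<sigma> \<in> Gam_aug Sig dH (No i) (qs i)"
    proof (cases "fr N i qs")
      case True then show ?thesis unfolding fr_def by blast
    next
      case False
      have gi: "run dH q0 (take (pl i) (w i)) = Some (qs i)"
        "proj (So i) (take (pl i) (w i)) = proj (So i) (t @ u)"
        using g i False lu unfolding Good_def by auto
      have D: "drop (pl i) (w i) = [] \<or> hd (drop (pl i) (w i)) \<in> So i" using g' i False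
        unfolding Good'_def by blast
      have wi: "proj (So i) (w i) = proj (So i) (t @ take (N - m i) u)"
            "run dH q0 (w i) = Some (pe i)" "\<sigma> \<in> Gam_aug Sig dH (No i) (pe i)"
        using w[OF i] by blast+
      have pu: "proj (So i) u = proj (So i) (take (N - m i) u) @ proj (So i) (drop (N - m i) u)"
        by (simp flip: proj_append)
      have "proj (So i) (take (pl i) (w i) @ drop (pl i) (w i)) @ proj (So i) (drop (N - m i) u)
            = proj (So i) t @ proj (So i) (take (N - m i) u) @ proj (So i) (drop (N - m i) u)"
        using wi(1) by simp
      also have "\<dots> = proj (So i) (take (pl i) (w i))" using gi(2) pu by simp
      finally have "proj (So i) (take (pl i) (w i) @ drop (pl i) (w i)) @ proj (So i) (drop (N - m i) u)
            = proj (So i) (take (pl i) (w i))" .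
      from notrack_lemma[OF this D] have "take (pl i) (w i) = w i" by simp
      then have "qs i = pe i" using gi(1) wi(2) by simp
      with wi(3) show ?thesis by simp
    qed
  qed
  ultimately show ?thesis using r unfolding R_def by blast
qed

theorem proposition2:
  fixes Q QH :: "'q set" and Sig :: "'e set"
    and d dH :: "'q \<Rightarrow> 'e \<Rightarrow> 'q option" and q0 :: 'q
    and n :: nat and So Sc :: "nat \<Rightarrow> 'e set" and No :: "nat \<Rightarrow> nat"
    and \<sigma> :: 'e and N :: nat
  assumes G: "dfa Q Sig d q0"
    and H: "dfa QH Sig dH q0"
    and sub: "sub_automaton QH dH Q d"
    and So_sub: "\<forall>i\<in>{1..n}. So i \<subseteq> Sig"
    and Sc_sub: "\<forall>i\<in>{1..n}. Sc i \<subseteq> Sig"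
    and sigma_c: "\<sigma> \<in> (\<Union>i\<in>{1..n}. Sc i)"
    and N_def: "N = Max (No ` Ic n Sc \<sigma>)"
  shows "(\<forall>s \<in> lang dH q0. length s \<ge> N \<longrightarrow>
            s @ [\<sigma>] \<in> lang d q0 - lang dH q0 \<longrightarrow>
            (\<forall>f \<in> Tconf Sig (Ic n Sc \<sigma>) So No s.
               \<exists>i \<in> Ic n Sc \<sigma>. f i @ [\<sigma>] \<notin> lang_aug Sig dH q0 (No i)))
     \<longleftrightarrow>
     \<not> (\<exists>q qs. (q, qs, N) \<in> verifier_reach Sig dH q0 (Ic n Sc \<sigma>) So No \<sigma> N \<and>
            \<sigma> \<in> Gam d q - Gam dH q \<and>
            (\<forall>i \<in> Ic n Sc \<sigma>. \<sigma> \<in> Gam_aug Sig dH (No i) (qs i)))"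
proof -
  define I where "I = Ic n Sc \<sigma>"
  have finI: "finite I" unfolding I_def Ic_def by simp
  have NoN: "No i \<le> N" if "i \<in> I" for i
    unfolding N_def using finI that I_def by (intro Max_ge) auto
  show ?thesis unfolding I_def[symmetric]
  proof
    assume A: "\<forall>s \<in> lang dH q0. length s \<ge> N \<longrightarrow>
            s @ [\<sigma>] \<in> lang d q0 - lang dH q0 \<longrightarrow>
            (\<forall>f \<in> Tconf Sig I So No s. \<exists>i \<in> I. f i @ [\<sigma>] \<notin> lang_aug Sig dH q0 (No i))"
    show "\<not> (\<exists>q qs. (q, qs, N) \<in> verifier_reach Sig dH q0 I So No \<sigma> N \<and>
            \<sigma> \<in> Gam d q - Gam dH q \<and> (\<forall>i \<in> I. \<sigma> \<in> Gam_aug Sig dH (No i) (qs i)))"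
    proof
      assume "\<exists>q qs. (q, qs, N) \<in> verifier_reach Sig dH q0 I So No \<sigma> N \<and>
            \<sigma> \<in> Gam d q - Gam dH q \<and> (\<forall>i \<in> I. \<sigma> \<in> Gam_aug Sig dH (No i) (qs i))"
      then obtain q qs where r: "(q, qs, N) \<in> verifier_reach Sig dH q0 I So No \<sigma> N"
        and g: "\<sigma> \<in> Gam d q - Gam dH q" and ga: "\<forall>i \<in> I. \<sigma> \<in> Gam_aug Sig dH (No i) (qs i)"
        by blast
      from reach_inv[OF H r] obtain s where s: "run dH q0 s = Some q" "length s \<ge> N"
        and si: "\<forall>i\<in>I. \<exists>si. run dH q0 si = Some (qs i) \<and>
         (proj (So i) si = proj (So i) s \<or>
          (N - N \<le> No i \<and> \<sigma> \<in> Gam_aug Sig dH (No i) (qs i) \<and>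
           (\<exists>m. m + N \<le> N + No i \<and> proj (So i) si = proj (So i) (trunc s m))))" by blast
      from bchoice[OF si] obtain f where f: "\<forall>i\<in>I. run dH q0 (f i) = Some (qs i) \<and>
         (proj (So i) (f i) = proj (So i) s \<or>
          (N - N \<le> No i \<and> \<sigma> \<in> Gam_aug Sig dH (No i) (qs i) \<and>
           (\<exists>m. m + N \<le> N + No i \<and> proj (So i) (f i) = proj (So i) (trunc s m))))" by blast
      have sl: "s \<in> lang dH q0" using s by (simp add: lang_def)
      have "run d q0 s = Some q" using run_sub[OF sub s(1)] .
      then have "s @ [\<sigma>] \<in> lang d q0" using g
        by (auto simp: lang_def Gam_def run_append split: option.splits)
      moreover have "s @ [\<sigma>] \<notin> lang dH q0" using g s
        by (auto simp: lang_def Gam_def run_append split: option.splits)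
      ultimately have "\<forall>f \<in> Tconf Sig I So No s. \<exists>i \<in> I. f i @ [\<sigma>] \<notin> lang_aug Sig dH q0 (No i)"
        using A sl s(2) by blast
      moreover have "f \<in> Tconf Sig I So No s"
        unfolding Tconf_def
      proof (intro CollectI ballI conjI)
        fix i assume i: "i \<in> I"
        show "f i \<in> lists Sig" using f i run_lists[OF H] by blast
        have "\<exists>m\<le>No i. proj (So i) (f i) = proj (So i) (trunc s m)"
        proof (cases "proj (So i) (f i) = proj (So i) s")
          case True then show ?thesis by (intro exI[of _ 0]) (simp add: trunc_def)
        next
          case False then show ?thesis using f i by fastforce
        qed
        then show "proj (So i) (f i) \<in> Theta (So i) (No i) s" unfolding Theta_def by blast
      qed
      ultimately obtain i where i: "i \<in> I" "f i @ [\<sigma>] \<notin> lang_aug Sig dH q0 (No i)" by blast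
      have "f i @ [\<sigma>] \<in> lang_aug Sig dH q0 (No i)"
        using f i ga by (intro lang_aug_snocI) auto
      with i show False by blast
    qed
  next
    assume nB: "\<not> (\<exists>q qs. (q, qs, N) \<in> verifier_reach Sig dH q0 I So No \<sigma> N \<and>
            \<sigma> \<in> Gam d q - Gam dH q \<and> (\<forall>i \<in> I. \<sigma> \<in> Gam_aug Sig dH (No i) (qs i)))"
    show "\<forall>s \<in> lang dH q0. length s \<ge> N \<longrightarrow>
            s @ [\<sigma>] \<in> lang d q0 - lang dH q0 \<longrightarrow>
            (\<forall>f \<in> Tconf Sig I So No s. \<exists>i \<in> I. f i @ [\<sigma>] \<notin> lang_aug Sig dH q0 (No i))"
    proof (intro ballI impI)
      fix s f assume sl: "s \<in> lang dH q0" and ls: "length s \<ge> N"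
        and sg: "s @ [\<sigma>] \<in> lang d q0 - lang dH q0" and f: "f \<in> Tconf Sig I So No s"
      show "\<exists>i \<in> I. f i @ [\<sigma>] \<notin> lang_aug Sig dH q0 (No i)"
      proof (rule ccontr)
        assume "\<not> ?thesis"
        then have fa: "\<forall>i\<in>I. f i @ [\<sigma>] \<in> lang_aug Sig dH q0 (No i)" by blast
        obtain q where q: "run dH q0 s = Some q" using sl by (auto simp: lang_def)
        have gq: "\<sigma> \<in> Gam d q - Gam dH q"
          using sg q run_sub[OF sub q]
          by (auto simp: lang_def Gam_def run_append split: option.splits)
        define t where "t = take (length s - N) s"
        define u where "u = drop (length s - N) s"
        have tu: "t @ u = s" unfolding t_def u_def by simp
        have lu: "length u = N" unfolding u_def using ls by simp
        have ex: "\<forall>i\<in>I. \<exists>mp. fst mp \<le> No i \<and> proj (So i) (f i) = proj (So i) (trunc s (fst mp)) \<and>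
             run dH q0 (f i) = Some (snd mp) \<and> \<sigma> \<in> Gam_aug Sig dH (No i) (snd mp)"
        proof
          fix i assume i: "i \<in> I"
          obtain m where m: "m \<le> No i" "proj (So i) (f i) = proj (So i) (trunc s m)"
            using f i unfolding Tconf_def Theta_def by blast
          obtain p where p: "run dH q0 (f i) = Some p" "\<sigma> \<in> Gam_aug Sig dH (No i) p"
            using lang_aug_snocD[OF fa[rule_format, OF i]] by blast
          show "\<exists>mp. fst mp \<le> No i \<and> proj (So i) (f i) = proj (So i) (trunc s (fst mp)) \<and>
             run dH q0 (f i) = Some (snd mp) \<and> \<sigma> \<in> Gam_aug Sig dH (No i) (snd mp)"
            using m p by (intro exI[of _ "(m, p)"]) simp
        qed
        from bchoice[OF ex] obtain g where g: "\<forall>i\<in>I. fst (g i) \<le> No i \<and>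
           proj (So i) (f i) = proj (So i) (trunc s (fst (g i))) \<and>
             run dH q0 (f i) = Some (snd (g i)) \<and> \<sigma> \<in> Gam_aug Sig dH (No i) (snd (g i))" by blast
        have tr: "trunc s m = t @ take (N - m) u" if "m \<le> N" for m
        proof -
          have "t @ take (N - m) u = take (length s - N + (N - m)) s"
            unfolding t_def u_def by (simp only: take_add)
          also have "length s - N + (N - m) = length s - m" using that ls by simp
          finally show ?thesis by (simp add: trunc_def)
        qed
        have w: "f i \<in> lists Sig \<and> fst (g i) \<le> No i \<and> No i \<le> N \<and>
            proj (So i) (f i) = proj (So i) (t @ take (N - fst (g i)) u) \<and>
            run dH q0 (f i) = Some (snd (g i)) \<and> \<sigma> \<in> Gam_aug Sig dH (No i) (snd (g i))"
          if i: "i \<in> I" for i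
        proof -
          have "fst (g i) \<le> N" using g i NoN[OF i] by auto
          then show ?thesis using g i NoN[OF i] f tr[of "fst (g i)"] unfolding Tconf_def by auto
        qed
        have "run dH q0 (t @ u) = Some q" using q tu by simp
        from hard[where w=f and m="\<lambda>i. fst (g i)" and pe="\<lambda>i. snd (g i)" and So=So and No=No and I=I and \<sigma>=\<sigma>,
            OF H finI this lu w] obtain qs where
          "(q, qs, N) \<in> verifier_reach Sig dH q0 I So No \<sigma> N"
          "\<forall>i\<in>I. \<sigma> \<in> Gam_aug Sig dH (No i) (qs i)" by blast
        with gq nB show False by blast
      qed
    qed
  qed
qed

end
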